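(* For every $\gamma>0$, every integer $N>1$ and every $\varepsilon>0$, for all $L$ large enough, $$\mathbb{P}_{N,\gamma}\big(G_N\text{ has more than }\varepsilon N\text{ edges with length larger than }L\big)\le\exp\{-L^{\gamma/8}N\}.$$
   Context: $\mathbb{P}_{N,\gamma}$ is the law of the random graph $G_N$ on vertex set $[N]=\{1,\dots,N\}$ containing all edges $\{x,x+1\}$ and in which each pair $\{x,y\}$ with $|x-y|>1$ is an edge independently with probability $\exp\{-|x-y|^\gamma\}$. The length of an edge $\{i,j\}$ is $|i-j|$. *)

theory Defs
  imports "HOL-Probability.Probability"
begin

text \<open>Unordered pairs {x,y} of [N] = {1..N} are represented as ordered pairs (x,y) with x < y.\<close>
definition vpairs :: "nat \<Rightarrow> (nat \<times> nat) set" where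
  "vpairs N = {(x, y). 1 \<le> x \<and> x < y \<and> y \<le> N}"

definition edge_prob :: "real \<Rightarrow> nat \<times> nat \<Rightarrow> real" where
  "edge_prob \<gamma> e = (if snd e - fst e = 1 then 1
                     else exp (- (real (snd e - fst e) powr \<gamma>)))"

definition rand_graph :: "nat \<Rightarrow> real \<Rightarrow> (nat \<times> nat) set pmf" where
  "rand_graph N \<gamma> =
     map_pmf (\<lambda>f. {e \<in> vpairs N. f e})
       (Pi_pmf (vpairs N) False (\<lambda>e. bernoulli_pmf (edge_prob \<gamma> e)))"

definition long_edges :: "real \<Rightarrow> (nat \<times> nat) set \<Rightarrow> (nat \<times> nat) set" where
  "long_edges L E = {e \<in> E. real (snd e - fst e) > L}"

end

theory Submission
  imports Defs "HOL-Real_Asymp.Real_Asymp"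
begin

lemma chernoff_Pi:
  fixes q :: "'a \<Rightarrow> real" and c t :: real
  assumes fin: "finite A" and SA: "S \<subseteq> A" and q: "\<And>e. e \<in> A \<Longrightarrow> 0 \<le> q e \<and> q e \<le> 1"
    and t: "t \<ge> 0"
  shows "measure_pmf.prob (Pi_pmf A False (\<lambda>e. bernoulli_pmf (q e)))
           {f. real (card {e\<in>S. f e}) > c} \<le> exp (exp t * (\<Sum>e\<in>S. q e) - t * c)"
proof -
  define D where "D = Pi_pmf A False (\<lambda>e. bernoulli_pmf (q e))"
  define h where "h = (\<lambda>e b. if e \<in> S \<and> b then exp t else (1::real))"
  define g where "g = (\<lambda>f. \<Prod>e\<in>A. h e (f e))"
  have finS: "finite S" using fin SA finite_subset by blast
  have g_eq: "g f = exp (t * real (card {e\<in>S. f e}))" for f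
  proof -
    have "g f = (\<Prod>e\<in>A. if e \<in> S \<and> f e then exp t else 1)"
      unfolding g_def h_def by simp
    also have "\<dots> = (\<Prod>e\<in>{e\<in>A. e \<in> S \<and> f e}. exp t)"
      using fin by (simp only: prod.inter_filter)
    also have "{e\<in>A. e \<in> S \<and> f e} = {e\<in>S. f e}" using SA by auto
    also have "(\<Prod>e\<in>{e\<in>S. f e}. exp t) = exp t ^ card {e\<in>S. f e}" by simp
    also have "\<dots> = exp (t * real (card {e\<in>S. f e}))"
      by (simp add: exp_of_nat_mult[symmetric] mult.commute)
    finally show ?thesis .
  qed
  have finD: "finite (set_pmf D)"
    unfolding D_def using fin by (simp add: set_Pi_pmf finite_PiE_dflt)
  have "measure_pmf.prob D {f. real (card {e\<in>S. f e}) > c}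
        = measure_pmf.expectation D (indicator {f. real (card {e\<in>S. f e}) > c})"
    by simp
  also have "\<dots> \<le> measure_pmf.expectation D (\<lambda>f. g f * exp (- t * c))"
  proof (rule integral_mono)
    show "integrable (measure_pmf D) (indicator {f. real (card {e\<in>S. f e}) > c} :: _ \<Rightarrow> real)"
      using finD by (rule integrable_measure_pmf_finite)
    show "integrable (measure_pmf D) (\<lambda>f. g f * exp (- t * c))"
      using finD by (rule integrable_measure_pmf_finite)
    fix f
    show "(indicator {f. real (card {e\<in>S. f e}) > c} f :: real) \<le> g f * exp (- t * c)"
    proof (cases "real (card {e\<in>S. f e}) > c")
      case True
      then have "t * c \<le> t * real (card {e\<in>S. f e})" using t by (simp add: mult_left_mono)
      then have "0 \<le> t * real (card {e\<in>S. f e}) + - t * c" by simp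
      then have "1 \<le> exp (t * real (card {e\<in>S. f e}) + - t * c)" by simp
      then show ?thesis using True by (simp add: g_eq exp_add[symmetric])
    next
      case False
      then show ?thesis by (simp add: g_eq)
    qed
  qed
  also have "\<dots> = measure_pmf.expectation D g * exp (- t * c)" by simp
  also have "measure_pmf.expectation D g = (\<Prod>e\<in>A. measure_pmf.expectation (bernoulli_pmf (q e)) (h e))"
    unfolding D_def g_def
    by (rule expectation_prod_Pi_pmf[OF fin])
       (auto simp: h_def intro!: integrable_measure_pmf_finite)
  also have "\<dots> = (\<Prod>e\<in>A. if e \<in> S then 1 + q e * (exp t - 1) else 1)"
    by (rule prod.cong) (auto simp: h_def q algebra_simps)
  also have "\<dots> \<le> (\<Prod>e\<in>A. exp (if e \<in> S then q e * exp t else 0))"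
  proof (rule prod_mono)
    fix e assume e: "e \<in> A"
    have a: "0 \<le> q e * (exp t - 1)" using q[OF e] t by simp
    have b: "1 + q e * (exp t - 1) \<le> exp (q e * (exp t - 1))" by (rule exp_ge_add_one_self)
    have c: "exp (q e * (exp t - 1)) \<le> exp (q e * exp t)"
      using q[OF e] by (simp add: mult_left_mono)
    have d: "1 + q e * (exp t - 1) \<le> exp (q e * exp t)" using b c by (rule order_trans)
    show "0 \<le> (if e \<in> S then 1 + q e * (exp t - 1) else 1) \<and>
          (if e \<in> S then 1 + q e * (exp t - 1) else 1) \<le> exp (if e \<in> S then q e * exp t else 0)"
      using a d by auto
  qed
  also have "\<dots> = exp (\<Sum>e\<in>A. if e \<in> S then q e * exp t else 0)"
    using fin by (simp add: exp_sum)
  also have "(\<Sum>e\<in>A. if e \<in> S then q e * exp t else 0) = (\<Sum>e\<in>S. q e * exp t)"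
    using fin SA by (simp add: sum.If_cases Int_absorb1)
  also have "\<dots> = exp t * (\<Sum>e\<in>S. q e)" by (simp add: sum_distrib_left mult.commute)
  finally have "measure_pmf.prob D {f. real (card {e\<in>S. f e}) > c}
      \<le> exp (exp t * (\<Sum>e\<in>S. q e)) * exp (- t * c)" by (simp add: mult_right_mono)
  then show ?thesis unfolding D_def by (simp add: exp_add[symmetric])
qed

lemma sum_inv_sq_aux: "n \<ge> 1 \<Longrightarrow> (\<Sum>j=1..n. 1 / real j ^ 2) \<le> 2 - 1 / real n"
proof (induction n rule: nat_induct_at_least)
  case base then show ?case by simp
next
  case (Suc n)
  have "(\<Sum>j=1..Suc n. 1 / real j ^ 2) = (\<Sum>j=1..n. 1 / real j ^ 2) + 1 / real (Suc n) ^ 2"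
    by simp
  also have "\<dots> \<le> 2 - 1 / real n + 1 / real (Suc n) ^ 2" using Suc.IH by simp
  also have "\<dots> \<le> 2 - 1 / real (Suc n)"
  proof -
    have n0: "real n > 0" using Suc.hyps by simp
    have e1: "1 / real n - 1 / real (Suc n) = 1 / (real n * (real n + 1))"
      using n0 by (simp add: field_simps)
    have e2: "1 / real (Suc n) ^ 2 \<le> 1 / (real n * (real n + 1))"
      by (rule frac_le) (use n0 in \<open>auto simp: power2_eq_square algebra_simps add_pos_pos\<close>)
    have "1 / real (Suc n) ^ 2 \<le> 1 / real n - 1 / real (Suc n)"
      using e1 e2 by simp
    then show ?thesis by simp
  qed
  finally show ?case .
qed

lemma sum_inv_sq: "(\<Sum>j=1..n. 1 / real j ^ 2) \<le> 2"
proof (cases "n \<ge> 1")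
  case True
  then show ?thesis using sum_inv_sq_aux[OF True]
    by (smt (verit) of_nat_0_le_iff divide_nonneg_nonneg)
qed simp

lemma inner_sum: "(\<Sum>y\<in>{x<..N}. 1 / real (y - x) ^ 2) \<le> 2"
proof -
  have "(\<Sum>y\<in>{x<..N}. 1 / real (y - x) ^ 2) = (\<Sum>j=1..N-x. 1 / real j ^ 2)"
  proof (rule sum.reindex_bij_witness[of _ "\<lambda>j. j + x" "\<lambda>y. y - x"])
  qed auto
  then show ?thesis using sum_inv_sq by simp
qed

lemma vpairs_sum: "(\<Sum>e\<in>vpairs N. 1 / real (snd e - fst e) ^ 2) \<le> 2 * real N"
proof -
  have V: "vpairs N = Sigma {1..N} (\<lambda>x. {x<..N})" by (auto simp: vpairs_def)
  have "(\<Sum>e\<in>vpairs N. 1 / real (snd e - fst e) ^ 2)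
      = (\<Sum>x\<in>{1..N}. \<Sum>y\<in>{x<..N}. 1 / real (y - x) ^ 2)"
    unfolding V by (subst sum.Sigma) (auto intro!: sum.cong simp: split_def)
  also have "\<dots> \<le> (\<Sum>x\<in>{1..N}. 2)" by (rule sum_mono) (rule inner_sum)
  also have "\<dots> = 2 * real N" by simp
  finally show ?thesis .
qed

lemma edge_prob_bounds: "0 \<le> edge_prob \<gamma> e \<and> edge_prob \<gamma> e \<le> 1"
  by (simp add: edge_prob_def)

lemma finite_vpairs: "finite (vpairs N)"
proof -
  have "vpairs N \<subseteq> {1..N} \<times> {1..N}" by (auto simp: vpairs_def)
  then show ?thesis using finite_subset by blast
qed

lemma long_sum:
  fixes L \<gamma> :: real
  assumes L1: "L \<ge> 1" and g: "\<gamma> > 0" and H: "\<And>x. x \<ge> L \<Longrightarrow> 4 * ln x \<le> x powr \<gamma>"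
  shows "(\<Sum>e\<in>{e\<in>vpairs N. real (snd e - fst e) > L}. edge_prob \<gamma> e)
         \<le> 2 * real N * exp (- (L powr \<gamma>) / 2)"
proof -
  let ?S = "{e\<in>vpairs N. real (snd e - fst e) > L}"
  let ?C = "exp (- (L powr \<gamma>) / 2)"
  have pt: "edge_prob \<gamma> e \<le> ?C * (1 / real (snd e - fst e) ^ 2)" if e: "e \<in> ?S" for e
  proof -
    define k where "k = real (snd e - fst e)"
    have kL: "k > L" using e k_def by simp
    have k1: "k > 1" using kL L1 by simp
    have "snd e - fst e \<noteq> 1" using k1 k_def by auto
    then have ep: "edge_prob \<gamma> e = exp (- (k powr \<gamma>))" by (simp add: edge_prob_def k_def)
    have a: "L powr \<gamma> \<le> k powr \<gamma>" using kL L1 g by (intro powr_mono2) auto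
    have b: "4 * ln k \<le> k powr \<gamma>" using H kL by simp
    have "- (k powr \<gamma>) \<le> - (L powr \<gamma>) / 2 + (- 2 * ln k)" using a b by simp
    then have "exp (- (k powr \<gamma>)) \<le> exp (- (L powr \<gamma>) / 2 + (- 2 * ln k))" by simp
    also have "\<dots> = ?C * exp (- 2 * ln k)" by (rule exp_add)
    also have "exp (- 2 * ln k) = 1 / k ^ 2"
    proof -
      have "exp (- 2 * ln k) = exp (ln k * (-2))" by (simp add: mult.commute)
      also have "\<dots> = k powr (-2)" using k1 by (simp add: powr_def)
      also have "\<dots> = 1 / k ^ 2" using k1 by (simp add: powr_minus powr_realpow divide_inverse)
      finally show ?thesis .
    qed
    finally show ?thesis using ep k_def by simp
  qed
  have "(\<Sum>e\<in>?S. edge_prob \<gamma> e) \<le> (\<Sum>e\<in>?S. ?C * (1 / real (snd e - fst e) ^ 2))"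
    by (rule sum_mono) (rule pt)
  also have "\<dots> \<le> (\<Sum>e\<in>vpairs N. ?C * (1 / real (snd e - fst e) ^ 2))"
    by (rule sum_mono2) (auto simp: finite_vpairs)
  also have "\<dots> = ?C * (\<Sum>e\<in>vpairs N. 1 / real (snd e - fst e) ^ 2)"
    by (simp add: sum_distrib_left)
  also have "\<dots> \<le> ?C * (2 * real N)"
    by (rule mult_left_mono) (auto intro: vpairs_sum)
  finally show ?thesis by (simp add: mult.commute mult.left_commute)
qed

lemma ln_bound:
  fixes L \<gamma> x :: real
  assumes L1: "L \<ge> 1" and g: "\<gamma> > 0" and Lp: "L powr (\<gamma>/2) \<ge> 8 / \<gamma>" and x: "x \<ge> L"
  shows "4 * ln x \<le> x powr \<gamma>"
proof -
  have x0: "x > 0" using L1 x by simp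
  have xp: "x powr (\<gamma>/2) \<ge> 8 / \<gamma>"
    using Lp powr_mono2[of "\<gamma>/2" L x] L1 x g by simp
  have "ln (x powr (\<gamma>/2)) \<le> x powr (\<gamma>/2) - 1" using x0 by (intro ln_le_minus_one) simp
  then have "(\<gamma>/2) * ln x \<le> x powr (\<gamma>/2)" using x0 by (simp add: ln_powr)
  then have "4 * ln x \<le> (8/\<gamma>) * x powr (\<gamma>/2)" using g by (simp add: field_simps)
  also have "\<dots> \<le> x powr (\<gamma>/2) * x powr (\<gamma>/2)"
    using xp by (intro mult_right_mono) auto
  also have "\<dots> = x powr \<gamma>" by (simp add: powr_add[symmetric])
  finally show ?thesis .
qed

lemma ev_powr_ge:
  fixes a T :: real assumes "a > 0"
  shows "\<forall>\<^sub>F L in at_top. T \<le> L powr a"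
  using real_powr_at_top[OF assms] by (simp add: filterlim_at_top)

theorem lemma10:
  fixes \<gamma> \<epsilon> :: real
  assumes "\<gamma> > 0" and "\<epsilon> > 0"
  shows "\<forall>\<^sub>F L in at_top. \<forall>N::nat. N > 1 \<longrightarrow>
           measure_pmf.prob (rand_graph N \<gamma>)
             {E. real (card (long_edges L E)) > \<epsilon> * real N}
           \<le> exp (- (L powr (\<gamma> / 8)) * real N)"
proof -
  have g: "\<gamma> > 0" and eps: "\<epsilon> > 0" using assms by auto
  have ev: "\<forall>\<^sub>F L in at_top. L \<ge> 1 \<and> 8 / \<gamma> \<le> L powr (\<gamma>/2) \<and> 2 \<le> L powr (\<gamma>/8)
              \<and> 4 / \<epsilon> \<le> L powr (7*\<gamma>/8)"
    using eventually_ge_at_top[of "1::real"] ev_powr_ge[of "\<gamma>/2" "8/\<gamma>"]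
          ev_powr_ge[of "\<gamma>/8" 2] ev_powr_ge[of "7*\<gamma>/8" "4/\<epsilon>"] g
    by (intro eventually_conj) auto
  show ?thesis
  proof (rule eventually_mono[OF ev], intro allI impI)
    fix L :: real and N :: nat
    assume H: "L \<ge> 1 \<and> 8 / \<gamma> \<le> L powr (\<gamma>/2) \<and> 2 \<le> L powr (\<gamma>/8)
              \<and> 4 / \<epsilon> \<le> L powr (7*\<gamma>/8)"
    assume "N > 1"
    define u where "u = L powr (\<gamma>/8)"
    define t where "t = 2 * u / \<epsilon>"
    define S where "S = {e\<in>vpairs N. real (snd e - fst e) > L}"
    define B where "B = (\<Sum>e\<in>S. edge_prob \<gamma> e)"
    have L1: "L \<ge> 1" and u2: "u \<ge> 2" and L7: "4 / \<epsilon> \<le> L powr (7*\<gamma>/8)"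
      using H u_def by auto
    have t0: "t \<ge> 0" using u2 eps t_def by simp
    have Bb: "B \<le> 2 * real N * exp (- (L powr \<gamma>) / 2)"
      unfolding B_def S_def
      by (rule long_sum[OF L1 g]) (rule ln_bound[OF L1 g], use H in auto)
    have ch: "measure_pmf.prob (Pi_pmf (vpairs N) False (\<lambda>e. bernoulli_pmf (edge_prob \<gamma> e)))
           {f. real (card {e\<in>S. f e}) > \<epsilon> * real N} \<le> exp (exp t * B - t * (\<epsilon> * real N))"
      unfolding B_def
      by (rule chernoff_Pi[OF finite_vpairs _ edge_prob_bounds t0]) (auto simp: S_def)
    have eqset: "(\<lambda>f. {e \<in> vpairs N. f e}) -` {E. real (card (long_edges L E)) > \<epsilon> * real N}
        = {f. real (card {e\<in>S. f e}) > \<epsilon> * real N}"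
    proof -
      have "long_edges L {e \<in> vpairs N. f e} = {e\<in>S. f e}" for f
        by (auto simp: long_edges_def S_def)
      then show ?thesis by auto
    qed
    have P: "measure_pmf.prob (rand_graph N \<gamma>) {E. real (card (long_edges L E)) > \<epsilon> * real N}
        \<le> exp (exp t * B - t * (\<epsilon> * real N))"
      using ch unfolding rand_graph_def measure_map_pmf eqset .
    have Lg: "L powr \<gamma> = u * L powr (7*\<gamma>/8)"
      unfolding u_def by (simp add: powr_add[symmetric])
    have "L powr \<gamma> \<ge> u * (4 / \<epsilon>)" unfolding Lg using u2 L7 by (intro mult_left_mono) auto
    then have tL: "t - L powr \<gamma> / 2 \<le> 0" using t_def by (simp add: field_simps)
    have "exp t * B \<le> exp t * (2 * real N * exp (- (L powr \<gamma>) / 2))"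
      using Bb by (intro mult_left_mono) auto
    also have "\<dots> = 2 * real N * exp (t - L powr \<gamma> / 2)"
    proof -
      have "exp t * exp (- (L powr \<gamma>) / 2) = exp (t - L powr \<gamma> / 2)"
        by (simp add: exp_add[symmetric])
      then show ?thesis by (simp add: mult_ac)
    qed
    also have "\<dots> \<le> 2 * real N * 1" using tL by (intro mult_left_mono) auto
    finally have eB: "exp t * B \<le> 2 * real N" by simp
    have tc: "t * (\<epsilon> * real N) = 2 * u * real N" using eps t_def by simp
    have "exp t * B - t * (\<epsilon> * real N) \<le> - u * real N"
    proof -
      have "2 * real N \<le> u * real N" using u2 by (intro mult_right_mono) auto
      then show ?thesis using eB tc by linarith
    qed
    then have "exp (exp t * B - t * (\<epsilon> * real N)) \<le> exp (- u * real N)" by simp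
    then show "measure_pmf.prob (rand_graph N \<gamma>) {E. real (card (long_edges L E)) > \<epsilon> * real N}
           \<le> exp (- (L powr (\<gamma> / 8)) * real N)"
      using P u_def order_trans by fastforce
  qed
qed

end
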